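(* Consider a rate-$1/2$ binary convolutional code $\mathcal{C}$ whose two coded bits $[c_{1,t},c_{2,t}]$ at each time $t$ are mapped, without any interleaving, to one 4-PAM symbol (BICM-T), transmitted over a real AWGN channel with signal-to-noise ratio $\gamma=1/N_0$, and decoded by a soft-input Viterbi decoder treating the two L-values per time instant as independent. Model the per-time-instant decoding metrics by the Gaussian (zero-crossing) approximations $$\mathrm{p}_1(\lambda)=\tfrac12\big[\psi(\lambda;-3\alpha,2\alpha)+\psi(\lambda;-\alpha,2\alpha)\big],\quad \mathrm{p}_2(\lambda)=\psi(\lambda;-\alpha,2\alpha),\quad \mathrm{p}_\Sigma(\lambda)=\psi(\lambda;-4\alpha,8\alpha),$$ where $\alpha=4\gamma\Delta^2$, $\Delta=1/\sqrt5$, and $\psi(\lambda;\mu,\sigma^2)=\frac{1}{\sqrt{2\pi\sigma^2}}\exp\!\big(-\frac{(\lambda-\mu)^2}{2\sigma^2}\big)$. Define $$\mathrm{PEP}_{\mathrm T}(w_1,w_2,w_\Sigma)=\int_0^\infty \{\mathrm{p}_1\}^{*w_1}*\{\mathrm{p}_2\}^{*w_2}*\{\mathrm{p}_\Sigma\}^{*w_\Sigma}(\lambda)\,d\lambda$$ and $\mathrm{UB}_{\mathrm T}=\sum_{w_1,w_2,w_\Sigma}\beta^{\mathcal C}_{w_1,w_2,w_\Sigma}\,\mathrm{PEP}_{\mathrm T}(w_1,w_2,w_\Sigma)$. Then $$\mathrm{UB}_{\mathrm T}=\sum_{w_1,w_2,w_\Sigma}\beta^{\mathcal C}_{w_1,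w_2,w_\Sigma}\left(\tfrac12\right)^{w_1}\sum_{j=0}^{w_1}\binom{w_1}{j}\,Q\!\left(\sqrt{\frac{(w_1+w_2+4w_\Sigma+2j)^2}{w_1+w_2+4w_\Sigma}\cdot\frac{2\gamma}{5}}\right).$$
   Context: The 4-PAM constellation is $\{-3\Delta,-\Delta,\Delta,3\Delta\}$ with $\Delta=1/\sqrt5$ (unit average energy), labeled by the binary reflected Gray code $[1,1]\mapsto-3\Delta$, $[1,0]\mapsto-\Delta$, $[0,0]\mapsto\Delta$, $[0,1]\mapsto3\Delta$; the noise has variance $N_0/2$. An error event $\mathbf E=[\mathbf e_1^{T},\dots,\mathbf e_T^{T}]$ is a $2\times T$ binary matrix that is the codeword of a trellis path diverging from the zero state and remerging with it after $T$ stages; $\mathbf i_{\mathbf E}$ is the corresponding input sequence and $d_H(\mathbf i_{\mathbf E})$ its Hamming weight. For an error event, $w_{\mathbf E,1}$ (resp. $w_{\mathbf E,2}$) is the number of columns equal to $[1,0]^T$ (resp. $[0,1]^T$), and $w_{\mathbf E,\Sigma}$ is the number of columns equal to $[1,1]^T$. The spectrum $\beta^{\mathcal C}_{w_1,w_2,w_\Sigma}$ is the sum of $d_H(\mathbf i_{\mathbf E})$ over all error events with $(w_{\mathbf E,1},w_{\mathbf E,2},w_{\mathbf E,\Sigma})=(w_1,w_2,w_\Sigma)$. $\{p\}^{*w}$ denotes the $w$-fold self-convolution, $*$ convolution, and $Q(x)=\frac1{\sqrt{2\pi}}\int_x^\infty e^{-u^2/2}du$. *)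

theory Defs
  imports "HOL-Probability.Probability"
begin

definition psi :: "real \<Rightarrow> real \<Rightarrow> real \<Rightarrow> real" where
  "psi mu s2 x = exp (- ((x - mu)^2) / (2 * s2)) / sqrt (2 * pi * s2)"

definition Qfun :: "real \<Rightarrow> real" where
  "Qfun x = (LINT u:{x<..}|lborel. exp (- (u^2) / 2) / sqrt (2 * pi))"

definition Delta :: real where "Delta = 1 / sqrt 5"

definition alpha :: "real \<Rightarrow> real" where "alpha \<gamma> = 4 * \<gamma> * Delta^2"

definition p1 :: "real \<Rightarrow> real \<Rightarrow> real" where
  "p1 \<gamma> x = (1/2) * (psi (-3 * alpha \<gamma>) (2 * alpha \<gamma>) x + psi (- alpha \<gamma>) (2 * alpha \<gamma>) x)"

definition p2 :: "real \<Rightarrow> real \<Rightarrow> real" where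
  "p2 \<gamma> x = psi (- alpha \<gamma>) (2 * alpha \<gamma>) x"

definition pS :: "real \<Rightarrow> real \<Rightarrow> real" where
  "pS \<gamma> x = psi (-4 * alpha \<gamma>) (8 * alpha \<gamma>) x"

fun conv_pow :: "real measure \<Rightarrow> nat \<Rightarrow> real measure" where
  "conv_pow M 0 = return borel 0"
| "conv_pow M (Suc n) = convolution M (conv_pow M n)"

text \<open>PEP_T: integral over [0,inf) of the density
  {p1}^{*w1} * {p2}^{*w2} * {pS}^{*wS}, i.e. the mass that the corresponding
  convolution measure assigns to [0,inf).\<close>
definition PEP_T :: "real \<Rightarrow> nat \<Rightarrow> nat \<Rightarrow> nat \<Rightarrow> real" where
  "PEP_T \<gamma> w1 w2 wS =
     measure (convolution
       (convolution (conv_pow (density lborel (\<lambda>x. ennreal (p1 \<gamma> x))) w1)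
                    (conv_pow (density lborel (\<lambda>x. ennreal (p2 \<gamma> x))) w2))
       (conv_pow (density lborel (\<lambda>x. ennreal (pS \<gamma> x))) wS)) {0..}"

definition UB_T :: "real \<Rightarrow> (nat \<times> nat \<times> nat \<Rightarrow> real) \<Rightarrow> real" where
  "UB_T \<gamma> \<beta> = (\<Sum>\<^sub>\<infinity>(w1, w2, wS)\<in>UNIV. \<beta> (w1, w2, wS) * PEP_T \<gamma> w1 w2 wS)"

end

theory Submission
  imports Defs
begin
definition G :: "real \<Rightarrow> real \<Rightarrow> real \<Rightarrow> real" where "G a u = normal_density a (sqrt u)"

lemma nd_shift: "normal_density a s x = normal_density 0 s (x - a)"
  by (simp add: normal_density_def)

lemma G_nonneg[simp]: "0 \<le> G a u x" by (simp add: G_def)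
lemma G_meas[measurable]: "G a u \<in> borel_measurable borel" by (simp add: G_def)

lemma conv_G:
  assumes u: "u > 0" and v: "v > 0"
  shows "(\<integral>\<^sup>+y. ennreal (G a u (x - y)) * ennreal (G b v y) \<partial>lborel) = ennreal (G (a+b) (u+v) x)"
proof -
  have "(\<integral>\<^sup>+y. ennreal (G a u (x - y)) * ennreal (G b v y) \<partial>lborel)
     = (\<integral>\<^sup>+y. ennreal (G a u (x - (b + 1 * y))) * ennreal (G b v (b + 1 * y)) \<partial>lborel)"
    by (subst nn_integral_real_affine[where c=1 and t=b]) (auto simp: G_def)
  also have "\<dots> = (\<integral>\<^sup>+y. ennreal (normal_density 0 (sqrt u) ((x - a - b) - y) * normal_density 0 (sqrt v) y) \<partial>lborel)"
    by (intro nn_integral_cong) (simp add: G_def ennreal_mult'[symmetric] nd_shift[of a] nd_shift[of b] algebra_simps)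
  also have "\<dots> = ennreal (normal_density 0 (sqrt ((sqrt u)\<^sup>2 + (sqrt v)\<^sup>2)) (x - a - b))"
    using conv_normal_density_zero_mean[of "sqrt u" "sqrt v"] u v by (metis real_sqrt_gt_zero)
  also have "\<dots> = ennreal (G (a+b) (u+v) x)"
    using u v by (simp add: G_def nd_shift[of "a+b"] algebra_simps)
  finally show ?thesis .
qed

definition mixf :: "'i set \<Rightarrow> ('i \<Rightarrow> real) \<Rightarrow> ('i \<Rightarrow> real) \<Rightarrow> real \<Rightarrow> real \<Rightarrow> real" where
  "mixf I c a u x = (\<Sum>i\<in>I. c i * G (a i) u x)"

lemma mixf_meas[measurable]: "mixf I c a u \<in> borel_measurable borel"
  unfolding mixf_def[abs_def] by measurable

lemma mixf_nonneg: "(\<And>i. i \<in> I \<Longrightarrow> c i \<ge> 0) \<Longrightarrow> mixf I c a u x \<ge> 0"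
  unfolding mixf_def by (intro sum_nonneg mult_nonneg_nonneg) auto

lemma ennreal_mixf:
  assumes "\<And>i. i \<in> I \<Longrightarrow> c i \<ge> 0"
  shows "ennreal (mixf I c a u x) = (\<Sum>i\<in>I. ennreal (c i) * ennreal (G (a i) u x))"
  unfolding mixf_def using assms by (subst sum_ennreal[symmetric]) (auto simp: ennreal_mult)

lemma nn_integral_G: "u > 0 \<Longrightarrow> (\<integral>\<^sup>+x. ennreal (G a u x) \<partial>lborel) = 1"
  using nn_integral_eq_integral[OF integrable_normal_density[where \<mu>=a and \<sigma>="sqrt u"]]
  by (simp add: G_def)

lemma finite_measure_mixf:
  assumes "finite I" "\<And>i. i \<in> I \<Longrightarrow> c i \<ge> 0" "u > 0"
  shows "finite_measure (density lborel (\<lambda>x. ennreal (mixf I c a u x)))"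
proof (rule finite_measureI)
  have "emeasure (density lborel (\<lambda>x. ennreal (mixf I c a u x))) (space (density lborel (\<lambda>x. ennreal (mixf I c a u x))))
     = (\<integral>\<^sup>+x. ennreal (mixf I c a u x) \<partial>lborel)"
    by (simp add: emeasure_density)
  also have "\<dots> = (\<Sum>i\<in>I. ennreal (c i) * 1)"
    using assms by (simp add: ennreal_mixf nn_integral_sum nn_integral_cmult nn_integral_G)
  finally show "emeasure (density lborel (\<lambda>x. ennreal (mixf I c a u x))) (space (density lborel (\<lambda>x. ennreal (mixf I c a u x)))) \<noteq> \<infinity>"
    using assms by (simp add: sum_ennreal)
qed

lemma conv_mixf:
  assumes "finite I" "finite J" "\<And>i. i \<in> I \<Longrightarrow> c i \<ge> 0" "\<And>j. j \<in> J \<Longrightarrow> d j \<ge> 0"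
    and u: "u > 0" and v: "v > 0"
  shows "(\<integral>\<^sup>+y. ennreal (mixf I c a u (x - y)) * ennreal (mixf J d b v y) \<partial>lborel)
       = ennreal (mixf (I \<times> J) (\<lambda>(i,j). c i * d j) (\<lambda>(i,j). a i + b j) (u+v) x)"
proof -
  have "(\<integral>\<^sup>+y. ennreal (mixf I c a u (x - y)) * ennreal (mixf J d b v y) \<partial>lborel)
     = (\<integral>\<^sup>+y. (\<Sum>i\<in>I. \<Sum>j\<in>J. (ennreal (c i) * ennreal (d j)) * (ennreal (G (a i) u (x - y)) * ennreal (G (b j) v y))) \<partial>lborel)"
    using assms(3,4) by (intro nn_integral_cong) (simp add: ennreal_mixf sum_distrib_left sum_distrib_right ac_simps)
  also have "\<dots> = (\<Sum>i\<in>I. \<Sum>j\<in>J. (ennreal (c i) * ennreal (d j)) * (\<integral>\<^sup>+y. ennreal (G (a i) u (x - y)) * ennreal (G (b j) v y) \<partial>lborel))"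
    by (simp add: nn_integral_sum nn_integral_cmult)
  also have "\<dots> = (\<Sum>i\<in>I. \<Sum>j\<in>J. (ennreal (c i) * ennreal (d j)) * ennreal (G (a i + b j) (u+v) x))"
    using u v by (simp add: conv_G)
  also have "\<dots> = (\<Sum>p\<in>I \<times> J. (ennreal (c (fst p)) * ennreal (d (snd p))) * ennreal (G ((\<lambda>(i,j). a i + b j) p) (u+v) x))"
    by (simp add: sum.cartesian_product split_beta)
  also have "\<dots> = (\<Sum>p\<in>I \<times> J. ennreal ((\<lambda>(i,j). c i * d j) p) * ennreal (G ((\<lambda>(i,j). a i + b j) p) (u+v) x))"
    using assms(3,4) by (intro sum.cong refl) (auto simp: ennreal_mult split_beta)
  also have "\<dots> = ennreal (mixf (I \<times> J) (\<lambda>(i,j). c i * d j) (\<lambda>(i,j). a i + b j) (u+v) x)"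
    using assms(3,4) by (subst ennreal_mixf) auto
  finally show ?thesis .
qed

lemma conv_mixf_measure:
  assumes "finite I" "finite J" "\<And>i. i \<in> I \<Longrightarrow> c i \<ge> 0" "\<And>j. j \<in> J \<Longrightarrow> d j \<ge> 0"
    and u: "u > 0" and v: "v > 0"
  shows "density lborel (\<lambda>x. ennreal (mixf I c a u x)) \<star> density lborel (\<lambda>x. ennreal (mixf J d b v x))
       = density lborel (\<lambda>x. ennreal (mixf (I \<times> J) (\<lambda>(i,j). c i * d j) (\<lambda>(i,j). a i + b j) (u+v) x))"
  by (subst convolution_density) (use assms in \<open>auto simp: finite_measure_mixf conv_mixf\<close>)

lemma finite_measure_return0: "finite_measure (return borel (0::real))"
  using prob_space_return[of 0 borel] prob_space_def by auto

lemma conv_return_right: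
  assumes "finite_measure N" "sets N = sets borel"
  shows "N \<star> return borel (0::real) = N"
proof (rule measure_eqI)
  show "sets (N \<star> return borel 0) = sets N" using assms by simp
  fix A assume "A \<in> sets (N \<star> return borel 0)"
  then have A[measurable]: "A \<in> sets borel" by simp
  have "emeasure (N \<star> return borel 0) A = \<integral>\<^sup>+x. \<integral>\<^sup>+y. indicator A (x + y) \<partial>return borel 0 \<partial>N"
    using assms by (intro convolution_emeasure') (auto intro: finite_measure_return0)
  also have "\<dots> = \<integral>\<^sup>+x. indicator A x \<partial>N"
    using assms by (intro nn_integral_cong) (simp add: nn_integral_return)
  also have "\<dots> = emeasure N A" using assms A by simp
  finally show "emeasure (N \<star> return borel 0) A = emeasure N A" .
qed

lemma conv_return_left:
  assumes "finite_measure N" "sets N = sets borel"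
  shows "return borel (0::real) \<star> N = N"
  using assms conv_return_right convolution_commutative[of N "return borel 0"]
  by (metis finite_measure_return0 sets_return)

lemma pascal_sum:
  fixes f :: "nat \<Rightarrow> real"
  shows "(\<Sum>j\<le>n. real (n choose j) * f j) + (\<Sum>j\<le>n. real (n choose j) * f (Suc j))
       = (\<Sum>k\<le>Suc n. real (Suc n choose k) * f k)"
proof -
  have "(\<Sum>k\<le>Suc n. real (Suc n choose k) * f k) = f 0 + (\<Sum>k\<le>n. real (Suc n choose Suc k) * f (Suc k))"
    by (subst sum.atMost_Suc_shift) simp
  also have "\<dots> = f 0 + (\<Sum>k\<le>n. real (n choose Suc k) * f (Suc k)) + (\<Sum>k\<le>n. real (n choose k) * f (Suc k))"
    by (simp add: sum.distrib algebra_simps)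
  also have "f 0 + (\<Sum>k\<le>n. real (n choose Suc k) * f (Suc k)) = (\<Sum>j\<le>n. real (n choose j) * f j)"
  proof (cases n)
    case 0 then show ?thesis by simp
  next
    case (Suc m)
    have "(\<Sum>j\<le>n. real (n choose j) * f j) = f 0 + (\<Sum>k\<le>m. real (n choose Suc k) * f (Suc k))"
      unfolding Suc by (subst sum.atMost_Suc_shift) simp
    also have "(\<Sum>k\<le>m. real (n choose Suc k) * f (Suc k)) = (\<Sum>k\<le>n. real (n choose Suc k) * f (Suc k))"
      unfolding Suc by (simp add: binomial_eq_0)
    finally show ?thesis by simp
  qed
  finally show ?thesis by simp
qed

definition stdf :: "real \<Rightarrow> real" where "stdf u = exp (- (u^2) / 2) / sqrt (2 * pi)"

lemma stdf_nonneg: "0 \<le> stdf u" by (simp add: stdf_def)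
lemma stdf_meas[measurable]: "stdf \<in> borel_measurable borel" unfolding stdf_def[abs_def] by measurable

lemma stdf_nd: "stdf u = normal_density 0 1 u"
  by (simp add: stdf_def normal_density_def)

lemma Qfun_nn: "ennreal (Qfun x) = (\<integral>\<^sup>+u. ennreal (indicator {x..} u * stdf u) \<partial>lborel)"
proof -
  have fin: "(\<integral>\<^sup>+u. ennreal (indicator {x<..} u * stdf u) \<partial>lborel) \<le> 1"
  proof -
    have "(\<integral>\<^sup>+u. ennreal (indicator {x<..} u * stdf u) \<partial>lborel) \<le> (\<integral>\<^sup>+u. ennreal (normal_density 0 1 u) \<partial>lborel)"
      by (intro nn_integral_mono) (auto simp: stdf_nd indicator_def)
    also have "\<dots> = 1"
      using nn_integral_eq_integral[OF integrable_normal_density[where \<mu>=0 and \<sigma>=1]] by simp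
    finally show ?thesis .
  qed
  have "Qfun x = integral\<^sup>L lborel (\<lambda>u. indicator {x<..} u * stdf u)"
    by (simp add: Qfun_def set_lebesgue_integral_def stdf_def)
  also have "\<dots> = enn2real (\<integral>\<^sup>+u. ennreal (indicator {x<..} u * stdf u) \<partial>lborel)"
    by (rule integral_eq_nn_integral) (auto simp: stdf_nonneg)
  finally have "ennreal (Qfun x) = (\<integral>\<^sup>+u. ennreal (indicator {x<..} u * stdf u) \<partial>lborel)"
    using fin by (simp add: ennreal_enn2real_if top_unique) (metis ennreal_one_neq_top neq_top_trans)
  also have "\<dots> = (\<integral>\<^sup>+u. ennreal (indicator {x..} u * stdf u) \<partial>lborel)"
    by (intro nn_integral_cong_AE eventually_mono[OF AE_lborel_singleton[of x]]) (auto simp: indicator_def)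
  finally show ?thesis .
qed

lemma tail_G:
  assumes V: "V > 0"
  shows "(\<integral>\<^sup>+x. ennreal (G a V x) * indicator {0..} x \<partial>lborel) = ennreal (Qfun (- a / sqrt V))"
proof -
  define s where "s = sqrt V"
  have s: "s > 0" using V by (simp add: s_def)
  have "(\<integral>\<^sup>+x. ennreal (G a V x) * indicator {0..} x \<partial>lborel)
      = ennreal \<bar>s\<bar> * (\<integral>\<^sup>+u. ennreal (G a V (a + s * u)) * indicator {0..} (a + s * u) \<partial>lborel)"
    using s by (subst nn_integral_real_affine[where c=s and t=a]) auto
  also have "\<dots> = (\<integral>\<^sup>+u. ennreal s * (ennreal (G a V (a + s * u)) * indicator {0..} (a + s * u)) \<partial>lborel)"
    using s by (subst nn_integral_cmult) auto
  also have "\<dots> = (\<integral>\<^sup>+u. ennreal (indicator {- a / s..} u * stdf u) \<partial>lborel)"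
  proof (intro nn_integral_cong)
    fix u
    have sq: "sqrt (pi * (2 * s\<^sup>2)) = s * sqrt (pi * 2)"
      using s by (simp add: real_sqrt_mult ac_simps)
    have e1: "s * G a V (a + s * u) = stdf u"
      using s V sq by (simp add: G_def stdf_def normal_density_def s_def[symmetric] power_mult_distrib field_simps)
    have e2: "(0 \<le> a + s * u) = (- a / s \<le> u)"
      using s by (auto simp: field_simps)
    show "ennreal s * (ennreal (G a V (a + s * u)) * indicator {0..} (a + s * u)) = ennreal (indicator {- a / s..} u * stdf u)"
      using s e1[symmetric] e2 by (auto simp: indicator_def ennreal_mult[symmetric] stdf_nonneg)
  qed
  also have "\<dots> = ennreal (Qfun (- a / sqrt V))"
    by (simp add: Qfun_nn s_def)
  finally show ?thesis .
qed

lemma Qfun_nonneg: "Qfun x \<ge> 0"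
proof -
  have "Qfun x = integral\<^sup>L lborel (\<lambda>u. indicator {x<..} u * stdf u)"
    by (simp add: Qfun_def set_lebesgue_integral_def stdf_def)
  also have "\<dots> \<ge> 0" by (intro integral_nonneg_AE) (auto simp: stdf_nonneg)
  finally show ?thesis .
qed

lemma pep_mix:
  assumes "finite I" "\<And>i. i \<in> I \<Longrightarrow> c i \<ge> 0" "V > 0"
  shows "measure (density lborel (\<lambda>x. ennreal (mixf I c a V x))) {0..} = (\<Sum>i\<in>I. c i * Qfun (- a i / sqrt V))"
proof -
  have "emeasure (density lborel (\<lambda>x. ennreal (mixf I c a V x))) {0..}
      = (\<integral>\<^sup>+x. ennreal (mixf I c a V x) * indicator {0..} x \<partial>lborel)"
    by (simp add: emeasure_density)
  also have "\<dots> = (\<integral>\<^sup>+x. (\<Sum>i\<in>I. ennreal (c i) * (ennreal (G (a i) V x) * indicator {0..} x)) \<partial>lborel)"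
    using assms by (intro nn_integral_cong) (simp add: ennreal_mixf sum_distrib_right mult.assoc)
  also have "\<dots> = (\<Sum>i\<in>I. ennreal (c i) * ennreal (Qfun (- a i / sqrt V)))"
    using assms by (simp add: nn_integral_sum nn_integral_cmult tail_G)
  also have "\<dots> = ennreal (\<Sum>i\<in>I. c i * Qfun (- a i / sqrt V))"
    using assms by (subst sum_ennreal[symmetric]) (auto simp: ennreal_mult Qfun_nonneg)
  finally show ?thesis
    unfolding measure_def using assms by (simp add: sum_nonneg Qfun_nonneg)
qed

lemma finite_measure_G: "u > 0 \<Longrightarrow> finite_measure (density lborel (\<lambda>x. ennreal (G a u x)))"
  by (rule finite_measureI) (simp add: emeasure_density nn_integral_G)

lemma conv_GG:
  assumes "u > 0" "v > 0"
  shows "density lborel (\<lambda>x. ennreal (G a u x)) \<star> density lborel (\<lambda>x. ennreal (G b v x))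
       = density lborel (\<lambda>x. ennreal (G (a+b) (u+v) x))"
  by (subst convolution_density) (use assms in \<open>auto simp: finite_measure_G conv_G\<close>)

lemma mixf_single: "mixf {0::nat} (\<lambda>_. 1) (\<lambda>_. b) v x = G b v x"
  by (simp add: mixf_def)

lemma mixf_times_single:
  "mixf (I \<times> {0::nat}) (\<lambda>(i,j). c i) (\<lambda>(i,j). a i + b) w x = mixf I c (\<lambda>i. a i + b) w x"
proof -
  have e: "I \<times> {0::nat} = (\<lambda>i. (i,0)) ` I" by auto
  show ?thesis unfolding mixf_def e by (simp add: sum.reindex inj_on_def)
qed

lemma conv_mix_G:
  assumes "finite I" "\<And>i. i \<in> I \<Longrightarrow> c i \<ge> 0" "u > 0" "v > 0"
  shows "density lborel (\<lambda>x. ennreal (mixf I c a u x)) \<star> density lborel (\<lambda>x. ennreal (G b v x))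
       = density lborel (\<lambda>x. ennreal (mixf I c (\<lambda>i. a i + b) (u+v) x))"
  using conv_mixf_measure[where I=I and J="{0::nat}" and c=c and d="\<lambda>_. 1" and a=a and b="\<lambda>_. b" and u=u and v=v] assms
  by (simp add: mixf_single mixf_times_single)

definition Gp :: "real \<Rightarrow> real \<Rightarrow> nat \<Rightarrow> real measure" where
  "Gp b v n = (if n = 0 then return borel 0 else density lborel (\<lambda>x. ennreal (G (real n * b) (real n * v) x)))"

lemma conv_pow_G:
  assumes "v > 0"
  shows "conv_pow (density lborel (\<lambda>x. ennreal (G b v x))) n = Gp b v n"
proof (induction n)
  case 0 show ?case by (simp add: Gp_def)
next
  case (Suc n)
  show ?case
  proof (cases "n = 0")
    case True
    then show ?thesis using assms
      by (simp add: Gp_def conv_return_right finite_measure_G)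
  next
    case False
    then have "conv_pow (density lborel (\<lambda>x. ennreal (G b v x))) (Suc n)
      = density lborel (\<lambda>x. ennreal (G (b + real n * b) (v + real n * v) x))"
      using Suc assms by (simp add: Gp_def conv_GG)
    then show ?thesis by (simp add: Gp_def algebra_simps)
  qed
qed

lemma mixf_cong:
  assumes "\<And>i. i \<in> I \<Longrightarrow> c i = c' i" "\<And>i. i \<in> I \<Longrightarrow> a i = a' i" "u = u'"
  shows "mixf I c a u = mixf I c' a' u'"
  using assms unfolding mixf_def by (intro ext sum.cong) auto

lemma conv_mix_Gp:
  assumes "finite I" "\<And>i. i \<in> I \<Longrightarrow> c i \<ge> 0" "u > 0" "v > 0"
  shows "density lborel (\<lambda>x. ennreal (mixf I c a u x)) \<star> Gp b v n
       = density lborel (\<lambda>x. ennreal (mixf I c (\<lambda>i. a i + real n * b) (u + real n * v) x))"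
proof (cases "n = 0")
  case True
  then show ?thesis using assms by (simp add: Gp_def conv_return_right finite_measure_mixf)
next
  case False
  then show ?thesis using assms by (simp add: Gp_def conv_mix_G)
qed

lemma psi_G: "s2 > 0 \<Longrightarrow> psi mu s2 x = G mu s2 x"
  by (simp add: psi_def G_def normal_density_def)

lemma alpha_eq: "alpha \<gamma> = 4 * \<gamma> / 5"
  by (simp add: alpha_def Delta_def power_divide)

lemma p1_mix:
  assumes "alpha \<gamma> > 0"
  shows "p1 \<gamma> x = mixf {..1::nat} (\<lambda>_. 1/2) (\<lambda>i. -(1 + 2 * real i) * alpha \<gamma>) (2 * alpha \<gamma>) x"
  using assms by (simp add: p1_def mixf_def psi_G)

lemma regroup:
  fixes \<alpha> :: real
  shows "mixf ({..1::nat} \<times> {..N}) (\<lambda>(i,j). 1/2 * ((1/2)^N * real (N choose j)))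
          (\<lambda>(i,j). -(1 + 2 * real i) * \<alpha> + -(real N + 2 * real j) * \<alpha>) (2 * \<alpha> + 2 * \<alpha> * real N) x
       = mixf {..Suc N} (\<lambda>j. (1/2)^(Suc N) * real (Suc N choose j)) (\<lambda>j. -(real (Suc N) + 2 * real j) * \<alpha>) (2 * \<alpha> * real (Suc N)) x"
proof -
  define f where "f j = (1/2)^(Suc N) * G (-(real (Suc N) + 2 * real j) * \<alpha>) (2 * \<alpha> * real (Suc N)) x" for j
  have v: "2 * \<alpha> + 2 * \<alpha> * real N = 2 * \<alpha> * real (Suc N)" by (simp add: algebra_simps)
  have g0: "-(1 + 2 * real (0::nat)) * \<alpha> + -(real N + 2 * real j) * \<alpha> = -(real (Suc N) + 2 * real j) * \<alpha>" for j
    by (simp add: algebra_simps)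
  have g1: "-(1 + 2 * real (1::nat)) * \<alpha> + -(real N + 2 * real j) * \<alpha> = -(real (Suc N) + 2 * real (Suc j)) * \<alpha>" for j
    by (simp add: algebra_simps)
  define T where "T i j = 1/2 * ((1/2)^N * real (N choose j)) * G (-(1 + 2 * real i) * \<alpha> + -(real N + 2 * real j) * \<alpha>) (2 * \<alpha> + 2 * \<alpha> * real N) x" for i j :: nat
  have "mixf ({..1::nat} \<times> {..N}) (\<lambda>(i,j). 1/2 * ((1/2)^N * real (N choose j)))
          (\<lambda>(i,j). -(1 + 2 * real i) * \<alpha> + -(real N + 2 * real j) * \<alpha>) (2 * \<alpha> + 2 * \<alpha> * real N) x
      = (\<Sum>i\<le>1::nat. \<Sum>j\<le>N. T i j)"
    unfolding mixf_def T_def by (simp add: sum.cartesian_product split_beta)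
  also have "\<dots> = (\<Sum>j\<le>N. T 0 j) + (\<Sum>j\<le>N. T 1 j)"
    by (simp add: One_nat_def)
  also have "\<dots> = (\<Sum>j\<le>N. real (N choose j) * f j) + (\<Sum>j\<le>N. real (N choose j) * f (Suc j))"
  proof -
    have "T 0 j = real (N choose j) * f j" for j
      unfolding T_def g0 v f_def by simp
    moreover have "T 1 j = real (N choose j) * f (Suc j)" for j
      unfolding T_def g1 v f_def by simp
    ultimately show ?thesis by simp
  qed
  also have "\<dots> = (\<Sum>k\<le>Suc N. real (Suc N choose k) * f k)"
    by (rule pascal_sum)
  also have "\<dots> = mixf {..Suc N} (\<lambda>j. (1/2)^(Suc N) * real (Suc N choose j)) (\<lambda>j. -(real (Suc N) + 2 * real j) * \<alpha>) (2 * \<alpha> * real (Suc N)) x"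
    unfolding mixf_def f_def by (simp add: algebra_simps)
  finally show ?thesis .
qed

lemma atMost_1_Suc: "{..1::nat} = {..Suc 0}" by simp

lemma conv_pow_p1:
  assumes a: "alpha \<gamma> > 0"
  shows "conv_pow (density lborel (\<lambda>x. ennreal (p1 \<gamma> x))) (Suc n)
    = density lborel (\<lambda>x. ennreal (mixf {..Suc n} (\<lambda>j. (1/2)^(Suc n) * real (Suc n choose j))
        (\<lambda>j. -(real (Suc n) + 2 * real j) * alpha \<gamma>) (2 * alpha \<gamma> * real (Suc n)) x))"
proof (induction n)
  have D1: "density lborel (\<lambda>x. ennreal (p1 \<gamma> x)) = density lborel (\<lambda>x. ennreal (mixf {..1::nat} (\<lambda>_. 1/2) (\<lambda>i. -(1 + 2 * real i) * alpha \<gamma>) (2 * alpha \<gamma>) x))"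
    using p1_mix[OF a] by simp
  case 0
  have "conv_pow (density lborel (\<lambda>x. ennreal (p1 \<gamma> x))) (Suc 0) = density lborel (\<lambda>x. ennreal (mixf {..1::nat} (\<lambda>_. 1/2) (\<lambda>i. -(1 + 2 * real i) * alpha \<gamma>) (2 * alpha \<gamma>) x))"
    unfolding D1 using a by (simp add: conv_return_right finite_measure_mixf)
  also have "mixf {..1::nat} (\<lambda>_. 1/2) (\<lambda>i. -(1 + 2 * real i) * alpha \<gamma>) (2 * alpha \<gamma>)
     = mixf {..Suc 0} (\<lambda>j. (1/2)^(Suc 0) * real (Suc 0 choose j)) (\<lambda>j. -(real (Suc 0) + 2 * real j) * alpha \<gamma>) (2 * alpha \<gamma> * real (Suc 0))"
    unfolding atMost_1_Suc by (intro mixf_cong) (auto simp: le_Suc_eq)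
  finally show ?case .
next
  have D1: "density lborel (\<lambda>x. ennreal (p1 \<gamma> x)) = density lborel (\<lambda>x. ennreal (mixf {..1::nat} (\<lambda>_. 1/2) (\<lambda>i. -(1 + 2 * real i) * alpha \<gamma>) (2 * alpha \<gamma>) x))"
    using p1_mix[OF a] by simp
  case (Suc n)
  define N where "N = Suc n"
  have "conv_pow (density lborel (\<lambda>x. ennreal (p1 \<gamma> x))) (Suc N)
      = (density lborel (\<lambda>x. ennreal (mixf {..1::nat} (\<lambda>_. 1/2) (\<lambda>i. -(1 + 2 * real i) * alpha \<gamma>) (2 * alpha \<gamma>) x))
        \<star> density lborel (\<lambda>x. ennreal (mixf {..N} (\<lambda>j. (1/2)^N * real (N choose j))
        (\<lambda>j. -(real N + 2 * real j) * alpha \<gamma>) (2 * alpha \<gamma> * real N) x)))"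
    using Suc.IH unfolding N_def by (simp only: conv_pow.simps D1)
  also have "\<dots> = density lborel (\<lambda>x. ennreal (mixf ({..1::nat} \<times> {..N}) (\<lambda>(i,j). 1/2 * ((1/2)^N * real (N choose j)))
          (\<lambda>(i,j). -(1 + 2 * real i) * alpha \<gamma> + -(real N + 2 * real j) * alpha \<gamma>) (2 * alpha \<gamma> + 2 * alpha \<gamma> * real N) x))"
    using a by (subst conv_mixf_measure) (auto simp: N_def)
  also have "\<dots> = density lborel (\<lambda>x. ennreal (mixf {..Suc N} (\<lambda>j. (1/2)^(Suc N) * real (Suc N choose j)) (\<lambda>j. -(real (Suc N) + 2 * real j) * alpha \<gamma>) (2 * alpha \<gamma> * real (Suc N)) x))"
    by (simp only: regroup)
  finally show ?case unfolding N_def .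
qed

lemma D2_eq: "alpha \<gamma> > 0 \<Longrightarrow> density lborel (\<lambda>x. ennreal (p2 \<gamma> x)) = density lborel (\<lambda>x. ennreal (G (- alpha \<gamma>) (2 * alpha \<gamma>) x))"
  by (simp add: p2_def psi_G)

lemma DS_eq: "alpha \<gamma> > 0 \<Longrightarrow> density lborel (\<lambda>x. ennreal (pS \<gamma> x)) = density lborel (\<lambda>x. ennreal (G (-4 * alpha \<gamma>) (8 * alpha \<gamma>) x))"
  by (simp add: pS_def psi_G)

lemma total_measure:
  assumes a: "alpha \<gamma> > 0" and n: "w1 + w2 + 4 * wS > 0"
  shows "convolution (convolution (conv_pow (density lborel (\<lambda>x. ennreal (p1 \<gamma> x))) w1)
                    (conv_pow (density lborel (\<lambda>x. ennreal (p2 \<gamma> x))) w2))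
       (conv_pow (density lborel (\<lambda>x. ennreal (pS \<gamma> x))) wS)
   = density lborel (\<lambda>x. ennreal (mixf {..w1} (\<lambda>j. (1/2)^w1 * real (w1 choose j))
        (\<lambda>j. -(real (w1 + w2 + 4 * wS) + 2 * real j) * alpha \<gamma>) (2 * alpha \<gamma> * real (w1 + w2 + 4 * wS)) x))"
proof -
  define \<alpha> where "\<alpha> = alpha \<gamma>"
  have a': "\<alpha> > 0" using a by (simp add: \<alpha>_def)
  have B: "conv_pow (density lborel (\<lambda>x. ennreal (p2 \<gamma> x))) w2 = Gp (- \<alpha>) (2 * \<alpha>) w2"
    using a' by (simp add: D2_eq a conv_pow_G \<alpha>_def)
  have C: "conv_pow (density lborel (\<lambda>x. ennreal (pS \<gamma> x))) wS = Gp (-4 * \<alpha>) (8 * \<alpha>) wS"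
    using a' by (simp add: DS_eq a conv_pow_G \<alpha>_def)
  show ?thesis
  proof (cases w1)
    case (Suc k)
    have "convolution (convolution (conv_pow (density lborel (\<lambda>x. ennreal (p1 \<gamma> x))) w1)
                    (conv_pow (density lborel (\<lambda>x. ennreal (p2 \<gamma> x))) w2))
       (conv_pow (density lborel (\<lambda>x. ennreal (pS \<gamma> x))) wS)
      = density lborel (\<lambda>x. ennreal (mixf {..Suc k} (\<lambda>j. (1/2)^(Suc k) * real (Suc k choose j))
        (\<lambda>j. -(real (Suc k) + 2 * real j) * \<alpha> + real w2 * (- \<alpha>) + real wS * (-4 * \<alpha>))
        (2 * \<alpha> * real (Suc k) + real w2 * (2 * \<alpha>) + real wS * (8 * \<alpha>)) x))"
      unfolding B C Suc conv_pow_p1[OF a] \<alpha>_def[symmetric] using a'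
      by (simp add: conv_mix_Gp add_pos_nonneg del: of_nat_Suc)
    also have "mixf {..Suc k} (\<lambda>j. (1/2)^(Suc k) * real (Suc k choose j))
        (\<lambda>j. -(real (Suc k) + 2 * real j) * \<alpha> + real w2 * (- \<alpha>) + real wS * (-4 * \<alpha>))
        (2 * \<alpha> * real (Suc k) + real w2 * (2 * \<alpha>) + real wS * (8 * \<alpha>))
      = mixf {..w1} (\<lambda>j. (1/2)^w1 * real (w1 choose j))
        (\<lambda>j. -(real (w1 + w2 + 4 * wS) + 2 * real j) * \<alpha>) (2 * \<alpha> * real (w1 + w2 + 4 * wS))"
      unfolding Suc by (intro mixf_cong) (simp_all add: algebra_simps)
    finally show ?thesis unfolding \<alpha>_def .
  next
    case 0
    have R: "convolution (return borel (0::real)) (return borel 0) = return borel 0"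
      by (simp add: conv_return_left finite_measure_return0)
    have tgt: "mixf {..w1} (\<lambda>j. (1/2)^w1 * real (w1 choose j))
        (\<lambda>j. -(real (w1 + w2 + 4 * wS) + 2 * real j) * \<alpha>) (2 * \<alpha> * real (w1 + w2 + 4 * wS))
       = mixf {0::nat} (\<lambda>_. 1) (\<lambda>_. -(real (w2 + 4 * wS)) * \<alpha>) (2 * \<alpha> * real (w2 + 4 * wS))"
      unfolding 0 atMost_0 by (intro mixf_cong) auto
    show ?thesis
    proof (cases w2)
      case (Suc k)
      have "convolution (convolution (conv_pow (density lborel (\<lambda>x. ennreal (p1 \<gamma> x))) w1)
                    (conv_pow (density lborel (\<lambda>x. ennreal (p2 \<gamma> x))) w2))
       (conv_pow (density lborel (\<lambda>x. ennreal (pS \<gamma> x))) wS)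
        = convolution (density lborel (\<lambda>x. ennreal (mixf {0::nat} (\<lambda>_. 1) (\<lambda>_. real w2 * (- \<alpha>)) (real w2 * (2 * \<alpha>)) x))) (Gp (-4 * \<alpha>) (8 * \<alpha>) wS)"
        unfolding B C 0 using a' Suc
        by (simp add: Gp_def mixf_single conv_return_left finite_measure_G del: of_nat_Suc)
      also have "\<dots> = density lborel (\<lambda>x. ennreal (mixf {0::nat} (\<lambda>_. 1) (\<lambda>_. real w2 * (- \<alpha>) + real wS * (-4 * \<alpha>)) (real w2 * (2 * \<alpha>) + real wS * (8 * \<alpha>)) x))"
        using a' Suc by (subst conv_mix_Gp) auto
      also have "mixf {0::nat} (\<lambda>_. 1) (\<lambda>_. real w2 * (- \<alpha>) + real wS * (-4 * \<alpha>)) (real w2 * (2 * \<alpha>) + real wS * (8 * \<alpha>))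
          = mixf {0::nat} (\<lambda>_. 1) (\<lambda>_. -(real (w2 + 4 * wS)) * \<alpha>) (2 * \<alpha> * real (w2 + 4 * wS))"
        by (intro mixf_cong) (simp_all add: algebra_simps)
      also note tgt[symmetric]
      finally show ?thesis unfolding \<alpha>_def .
    next
      case w20: 0
      have wS: "wS > 0" using n 0 w20 by simp
      have "convolution (convolution (conv_pow (density lborel (\<lambda>x. ennreal (p1 \<gamma> x))) w1)
                    (conv_pow (density lborel (\<lambda>x. ennreal (p2 \<gamma> x))) w2))
       (conv_pow (density lborel (\<lambda>x. ennreal (pS \<gamma> x))) wS)
        = density lborel (\<lambda>x. ennreal (G (real wS * (-4 * \<alpha>)) (real wS * (8 * \<alpha>)) x))"
        unfolding B C 0 w20 using a' wS
        by (simp add: Gp_def R conv_return_left finite_measure_G)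
      also have "(\<lambda>x. G (real wS * (-4 * \<alpha>)) (real wS * (8 * \<alpha>)) x)
          = mixf {0::nat} (\<lambda>_. 1) (\<lambda>_. -(real (w2 + 4 * wS)) * \<alpha>) (2 * \<alpha> * real (w2 + 4 * wS))"
        unfolding w20 by (rule ext) (simp add: mixf_def algebra_simps)
      also note tgt[symmetric]
      finally show ?thesis unfolding \<alpha>_def .
    qed
  qed
qed

lemma qarg:
  fixes m N \<gamma> :: real
  assumes "m \<ge> 0" "N > 0" "\<gamma> > 0"
  shows "- (- m * (4 * \<gamma> / 5)) / sqrt (2 * (4 * \<gamma> / 5) * N) = sqrt (m^2 / N * (2 * \<gamma> / 5))"
proof -
  have p: "2 * (4 * \<gamma> / 5) * N > 0" using assms by simp
  show ?thesis
  proof (rule real_sqrt_unique[symmetric])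
    show "0 \<le> - (- m * (4 * \<gamma> / 5)) / sqrt (2 * (4 * \<gamma> / 5) * N)"
      using assms p by simp
    have "(- (- m * (4 * \<gamma> / 5)) / sqrt (2 * (4 * \<gamma> / 5) * N))^2 = (m * (4 * \<gamma> / 5))^2 / (2 * (4 * \<gamma> / 5) * N)"
      using p by (simp add: power_divide)
    also have "\<dots> = m^2 / N * (2 * \<gamma> / 5)"
      using assms by (simp add: field_simps power2_eq_square)
    finally show "(- (- m * (4 * \<gamma> / 5)) / sqrt (2 * (4 * \<gamma> / 5) * N))^2 = m^2 / N * (2 * \<gamma> / 5)" .
  qed
qed

lemma PEP_eq:
  assumes g: "\<gamma> > 0" and n: "w1 + w2 + 4 * wS > 0"
  shows "PEP_T \<gamma> w1 w2 wS = (1/2)^w1 * (\<Sum>j\<le>w1. real (w1 choose j) *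
          Qfun (sqrt ((real (w1 + w2 + 4 * wS + 2 * j))^2 / real (w1 + w2 + 4 * wS) * (2 * \<gamma> / 5))))"
proof -
  have a: "alpha \<gamma> > 0" using g by (simp add: alpha_eq)
  have N: "real (w1 + w2 + 4 * wS) > 0" by (simp only: of_nat_0_less_iff n)
  have V: "2 * alpha \<gamma> * real (w1 + w2 + 4 * wS) > 0"
    using a N by simp
  have "PEP_T \<gamma> w1 w2 wS = (\<Sum>j\<le>w1. (1/2)^w1 * real (w1 choose j) *
      Qfun (- (-(real (w1 + w2 + 4 * wS) + 2 * real j) * alpha \<gamma>) / sqrt (2 * alpha \<gamma> * real (w1 + w2 + 4 * wS))))"
  proof -
    define c where "c = (\<lambda>j. (1/2)^w1 * real (w1 choose j))"
    define m where "m = (\<lambda>j. -(real (w1 + w2 + 4 * wS) + 2 * real j) * alpha \<gamma>)"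
    define W where "W = 2 * alpha \<gamma> * real (w1 + w2 + 4 * wS)"
    have c0: "\<And>j. j \<in> {..w1} \<Longrightarrow> c j \<ge> 0" unfolding c_def by simp
    have "PEP_T \<gamma> w1 w2 wS = measure (density lborel (\<lambda>x. ennreal (mixf {..w1} c m W x))) {0..}"
      unfolding PEP_T_def total_measure[OF a n] c_def m_def W_def ..
    also have "\<dots> = (\<Sum>j\<le>w1. c j * Qfun (- m j / sqrt W))"
      using pep_mix[of "{..w1}" c W m] c0 V unfolding W_def by blast
    finally show ?thesis unfolding c_def m_def W_def .
  qed
  also have "\<dots> = (\<Sum>j\<le>w1. (1/2)^w1 * (real (w1 choose j) *
          Qfun (sqrt ((real (w1 + w2 + 4 * wS + 2 * j))^2 / real (w1 + w2 + 4 * wS) * (2 * \<gamma> / 5)))))"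
  proof (intro sum.cong refl)
    fix j
    have "- (-(real (w1 + w2 + 4 * wS) + 2 * real j) * alpha \<gamma>) / sqrt (2 * alpha \<gamma> * real (w1 + w2 + 4 * wS))
        = sqrt ((real (w1 + w2 + 4 * wS + 2 * j))^2 / real (w1 + w2 + 4 * wS) * (2 * \<gamma> / 5))"
    proof -
      have e: "real (w1 + w2 + 4 * wS) + 2 * real j = real (w1 + w2 + 4 * wS + 2 * j)" by simp
      show ?thesis unfolding alpha_eq e
        by (rule qarg) (use N g in auto)
    qed
    then show "(1/2)^w1 * real (w1 choose j) *
      Qfun (- (-(real (w1 + w2 + 4 * wS) + 2 * real j) * alpha \<gamma>) / sqrt (2 * alpha \<gamma> * real (w1 + w2 + 4 * wS)))
      = (1/2)^w1 * (real (w1 choose j) *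
          Qfun (sqrt ((real (w1 + w2 + 4 * wS + 2 * j))^2 / real (w1 + w2 + 4 * wS) * (2 * \<gamma> / 5))))"
      by (simp only: mult.assoc)
  qed
  finally show ?thesis by (simp only: sum_distrib_left)
qed

theorem theorem1:
  fixes \<gamma> :: real and \<beta> :: "nat \<times> nat \<times> nat \<Rightarrow> real"
  assumes "\<gamma> > 0"
    and "\<beta> (0, 0, 0) = 0"
  shows "UB_T \<gamma> \<beta> =
    (\<Sum>\<^sub>\<infinity>(w1, w2, wS)\<in>UNIV. \<beta> (w1, w2, wS) * (1/2) ^ w1 *
       (\<Sum>j\<le>w1. real (w1 choose j) *
          Qfun (sqrt ((real (w1 + w2 + 4 * wS + 2 * j))^2 / real (w1 + w2 + 4 * wS)
                      * (2 * \<gamma> / 5)))))"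
proof -
  have eq: "(\<lambda>(w1, w2, wS). \<beta> (w1, w2, wS) * PEP_T \<gamma> w1 w2 wS)
     = (\<lambda>(w1, w2, wS). \<beta> (w1, w2, wS) * (1/2) ^ w1 *
       (\<Sum>j\<le>w1. real (w1 choose j) *
          Qfun (sqrt ((real (w1 + w2 + 4 * wS + 2 * j))^2 / real (w1 + w2 + 4 * wS)
                      * (2 * \<gamma> / 5)))))"
  proof (intro ext, clarify)
    fix w1 w2 wS :: nat
    show "\<beta> (w1, w2, wS) * PEP_T \<gamma> w1 w2 wS = \<beta> (w1, w2, wS) * (1/2) ^ w1 *
       (\<Sum>j\<le>w1. real (w1 choose j) *
          Qfun (sqrt ((real (w1 + w2 + 4 * wS + 2 * j))^2 / real (w1 + w2 + 4 * wS)
                      * (2 * \<gamma> / 5))))"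
    proof (cases "w1 + w2 + 4 * wS > 0")
      case True
      show ?thesis unfolding PEP_eq[OF assms(1) True] by (simp only: mult.assoc)
    next
      case False
      then have "w1 = 0" "w2 = 0" "wS = 0" by auto
      then show ?thesis using assms(2) by simp
    qed
  qed
  show ?thesis unfolding UB_T_def eq ..
qed

end
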